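(* Let $G$ be a finite group, $H$ a subgroup of $G$ and $N$ a normal subgroup of $G$ with $NH=G$. Let $p$ be a prime dividing both $(G:H)$ and $(G:N)$, and let $P$ be a $p$-Sylow subgroup of $G$. If $g\in G$ satisfies $\mathrm{ord}_p(P:P\cap gHg^{-1})=\mathrm{ord}_p(G:H)$, then $(P\cap N)\cdot(P\cap gHg^{-1})=P$.
   Context: $\mathrm{ord}_p$ denotes the exponent of the prime $p$ in a positive integer. *)

theory Defs
  imports "HOL-Algebra.Algebra" "HOL-Computational_Algebra.Primes"
begin

definition grp_index :: "('a, 'b) monoid_scheme \<Rightarrow> 'a set \<Rightarrow> nat" where
  "grp_index G H = card (rcosets\<^bsub>G\<^esub> H)"

definition is_sylow :: "('a, 'b) monoid_scheme \<Rightarrow> nat \<Rightarrow> 'a set \<Rightarrow> bool" where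
  "is_sylow G p P \<longleftrightarrow> subgroup P G \<and> card P = p ^ multiplicity p (order G)"

end

theory Submission
  imports Defs
begin

lemma (in group) set_mult_image: "A <#> B = (\<lambda>(a,b). a \<otimes> b) ` (A \<times> B)"
  unfolding set_mult_def by auto

lemma (in group) card_set_mult:
  assumes A: "subgroup A G" and B: "subgroup B G" and fA: "finite A" and fB: "finite B"
  shows "card (A <#> B) * card (A \<inter> B) = card A * card B"
proof -
  define f where "f = (\<lambda>(a,b). a \<otimes> b)"
  have AG: "A \<subseteq> carrier G" and BG: "B \<subseteq> carrier G" using A B subgroup.subset by auto
  have img: "f ` (A \<times> B) = A <#> B" unfolding f_def set_mult_image ..
  have fin: "finite (A <#> B)" using img fA fB by (metis finite_SigmaI finite_imageI)
  have fiber: "card {y \<in> A \<times> B. f y = x} = card (A \<inter> B)" if x: "x \<in> A <#> B" for x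
  proof -
    obtain a0 b0 where a0: "a0 \<in> A" and b0: "b0 \<in> B" and xe: "x = a0 \<otimes> b0"
      using x unfolding set_mult_def by auto
    have a0G: "a0 \<in> carrier G" and b0G: "b0 \<in> carrier G" using a0 b0 AG BG by auto
    define \<phi> where "\<phi> = (\<lambda>c. (a0 \<otimes> c, inv c \<otimes> b0))"
    have "bij_betw \<phi> (A \<inter> B) {y \<in> A \<times> B. f y = x}"
    proof (rule bij_betw_imageI)
      show "inj_on \<phi> (A \<inter> B)"
      proof (rule inj_onI)
        fix c d assume c: "c \<in> A \<inter> B" and d: "d \<in> A \<inter> B" and e: "\<phi> c = \<phi> d"
        have cG: "c \<in> carrier G" and dG: "d \<in> carrier G" using c d AG by auto
        have "a0 \<otimes> c = a0 \<otimes> d" using e unfolding \<phi>_def by simp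
        thus "c = d" by (rule l_cancel[OF _ cG dG a0G])
      qed
      show "\<phi> ` (A \<inter> B) = {y \<in> A \<times> B. f y = x}"
      proof (intro equalityI subsetI)
        fix y assume "y \<in> \<phi> ` (A \<inter> B)"
        then obtain c where c: "c \<in> A" "c \<in> B" and y: "y = \<phi> c" by auto
        have cG: "c \<in> carrier G" using c AG by auto
        have "a0 \<otimes> c \<in> A" using subgroup.m_closed[OF A a0 c(1)] .
        moreover have "inv c \<otimes> b0 \<in> B" using subgroup.m_closed[OF B subgroup.m_inv_closed[OF B c(2)] b0] .
        moreover have "(a0 \<otimes> c) \<otimes> (inv c \<otimes> b0) = x"
          using a0G b0G cG xe by (simp add: m_assoc[symmetric]) (simp add: m_assoc)
        ultimately show "y \<in> {y \<in> A \<times> B. f y = x}" using y unfolding \<phi>_def f_def by auto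
      next
        fix y assume "y \<in> {y \<in> A \<times> B. f y = x}"
        then obtain a b where ab: "a \<in> A" "b \<in> B" "a \<otimes> b = a0 \<otimes> b0" and y: "y = (a, b)"
          unfolding f_def xe by auto
        have aG: "a \<in> carrier G" and bG: "b \<in> carrier G" using ab AG BG by auto
        define c where "c = inv a0 \<otimes> a"
        have cA: "c \<in> A" unfolding c_def using subgroup.m_closed[OF A subgroup.m_inv_closed[OF A a0] ab(1)] .
        have c2: "c = b0 \<otimes> inv b"
        proof -
          have "a = (a0 \<otimes> b0) \<otimes> inv b" using inv_solve_right[of a "a0 \<otimes> b0" b] ab(3) aG bG a0G b0G by simp
          hence "a = a0 \<otimes> (b0 \<otimes> inv b)" using bG a0G b0G by (simp add: m_assoc)
          thus ?thesis unfolding c_def using inv_solve_left'[of "b0 \<otimes> inv b" a0 a] aG bG a0G b0G by simp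
        qed
        have cB: "c \<in> B" unfolding c2 using subgroup.m_closed[OF B b0 subgroup.m_inv_closed[OF B ab(2)]] .
        have cG: "c \<in> carrier G" using cA AG by auto
        have e1: "a0 \<otimes> c = a" using inv_solve_left'[of c a0 a] cG aG a0G c_def by simp
        have e2: "inv c \<otimes> b0 = b" using inv_solve_left'[of b c b0] inv_solve_right'[of c b0 b] c2 cG bG b0G by simp
        show "y \<in> \<phi> ` (A \<inter> B)" using cA cB e1 e2 y unfolding \<phi>_def by force
      qed
    qed
    thus ?thesis by (simp add: bij_betw_same_card)
  qed
  have "card A * card B = card (A \<times> B)" by (simp add: card_cartesian_product)
  also have "\<dots> = (\<Sum>x\<in>A <#> B. card {y \<in> A \<times> B. f y = x})"
    using sum.group[of "A \<times> B" "A <#> B" f "\<lambda>_. 1::nat"] fA fB fin img by simp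
  also have "\<dots> = (\<Sum>x\<in>A <#> B. card (A \<inter> B))" using fiber by simp
  finally show ?thesis by simp
qed


lemma (in group) card_dvd_sub:
  assumes S1: "subgroup S1 G" and S2: "subgroup S2 G" and S12: "S1 \<subseteq> S2"
  shows "card S1 dvd card S2"
proof -
  have "card (rcosets\<^bsub>G\<lparr>carrier := S2\<rparr>\<^esub> S1) * card S1 = order (G\<lparr>carrier := S2\<rparr>)"
    using group.lagrange[OF subgroup_imp_group[OF S2] subgroup_incl[OF S1 S2 S12]] .
  hence "card (rcosets\<^bsub>G\<lparr>carrier := S2\<rparr>\<^esub> S1) * card S1 = card S2" by (simp add: order_def)
  thus ?thesis by (metis dvd_triv_right)
qed

lemma dvd_prime_pow_eq:
  fixes p x e :: nat
  assumes "Factorial_Ring.prime p" "x dvd p ^ e"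
  shows "x = p ^ multiplicity p x \<and> multiplicity p x \<le> e"
proof -
  obtain i where "i \<le> e" "x = p ^ i" using assms divides_primepow_nat by blast
  moreover have "multiplicity p (p ^ i) = i" using assms(1) by (simp add: multiplicity_prime_power)
  ultimately show ?thesis by simp
qed

lemma (in group) main_lemma:
  fixes H N P :: "'a set" and p :: nat and g :: 'a
  assumes "group G" and "finite (carrier G)"
    and "subgroup H G" and "N \<lhd> G"
    and "N <#>\<^bsub>G\<^esub> H = carrier G"
    and "Factorial_Ring.prime p" and "p dvd grp_index G H" and "p dvd grp_index G N"
    and "is_sylow G p P"
    and "g \<in> carrier G"
    and "multiplicity p (grp_index (G\<lparr>carrier := P\<rparr>) (P \<inter> ((g <#\<^bsub>G\<^esub> H) #>\<^bsub>G\<^esub> inv\<^bsub>G\<^esub> g)))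
         = multiplicity p (grp_index G H)"
  shows "(P \<inter> N) <#>\<^bsub>G\<^esub> (P \<inter> ((g <#\<^bsub>G\<^esub> H) #>\<^bsub>G\<^esub> inv\<^bsub>G\<^esub> g)) = P"
proof -
  note fin = assms(2) and HG = assms(3) and NG = assms(4) and NH = assms(5) and pp = assms(6)
  note gG = assms(10) and hyp = assms(11)
  define K where "K = (g <#\<^bsub>G\<^esub> H) #>\<^bsub>G\<^esub> inv\<^bsub>G\<^esub> g"
  define A where "A = P \<inter> N"
  define B where "B = P \<inter> K"
  define e where "e = multiplicity p (order G)"
  define vp where "vp = (\<lambda>x::nat. multiplicity p x)"
  have pe: "prime_elem p" using pp by simp
  have p1: "p > 1" using pp prime_gt_1_nat by blast
  have PG: "subgroup P G" and cardP: "card P = p ^ e"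
    using assms(9) unfolding is_sylow_def e_def by auto
  have NsG: "subgroup N G" using NG normal_imp_subgroup by blast
  have KG: "subgroup K G" unfolding K_def
    using subgroup_conjugation_is_surj1[of "inv g" H] gG HG by simp
  have Kimg: "K = (\<lambda>h. g \<otimes> h \<otimes> inv g) ` H" unfolding K_def l_coset_def r_coset_def by auto
  have HsubG: "H \<subseteq> carrier G" using HG subgroup.subset by blast
  have "inj_on (\<lambda>h. g \<otimes> h \<otimes> inv g) H"
    proof (rule inj_onI)
    fix x y assume "x \<in> H" "y \<in> H" "g \<otimes> x \<otimes> inv g = g \<otimes> y \<otimes> inv g"
    thus "x = y" using conjugation_is_inj[OF gG] HsubG by (meson subsetD)
  qed
  hence cardK: "card K = card H" unfolding Kimg by (rule card_image)
  have AG: "subgroup A G" unfolding A_def using subgroups_Inter_pair[OF PG NsG] .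
  have BG: "subgroup B G" unfolding B_def using subgroups_Inter_pair[OF PG KG] .
  have finS: "finite S" if "subgroup S G" for S
    using finite_subset[OF subgroup.subset[OF that] fin] .
  have posS: "card S > 0" if "subgroup S G" for S
    using finS[OF that] subgroup.one_closed[OF that] card_gt_0_iff by auto
  have cardG: "order G = card (carrier G)" by (simp add: order_def)
  have Gsub: "subgroup (carrier G) G" by (rule subgroup_self)
  have posG: "order G > 0" using posS[OF Gsub] cardG by simp

  interpret si: second_isomorphism_grp N G P
    by (rule second_isomorphism_grp.intro[OF NG]) (simp add: second_isomorphism_grp_axioms_def PG)
  have NPG: "subgroup (N <#> P) G" by (rule si.normal_set_mult_subgroup)
  have eq1: "card (N <#> P) * card A = card N * card P"
    using card_set_mult[OF NsG PG finS[OF NsG] finS[OF PG]] unfolding A_def by (simp add: Int_commute)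
  have "card (N <#> P) dvd order G"
    using card_dvd_sub[OF NPG Gsub] subgroup.subset[OF NPG] cardG by simp
  hence vNP: "vp (card (N <#> P)) \<le> e" unfolding vp_def e_def using posG dvd_imp_multiplicity_le by auto
  have "vp (card (N <#> P)) + vp (card A) = vp (card N) + e"
  proof -
    have "vp (card (N <#> P) * card A) = vp (card N * card P)" using eq1 by simp
    thus ?thesis unfolding vp_def using posS[OF NPG] posS[OF AG] posS[OF NsG] cardP pe p1
      by (simp add: prime_elem_multiplicity_mult_distrib multiplicity_prime_power)
  qed
  hence s1: "vp (card N) \<le> vp (card A)" using vNP by linarith

  have BP: "B \<subseteq> P" unfolding B_def by auto
  have "card (rcosets\<^bsub>G\<lparr>carrier := P\<rparr>\<^esub> B) * card B = order (G\<lparr>carrier := P\<rparr>)"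
    using group.lagrange[OF subgroup_imp_group[OF PG] subgroup_incl[OF BG PG BP]] .
  hence eqB: "grp_index (G\<lparr>carrier := P\<rparr>) B * card B = p ^ e"
    unfolding grp_index_def order_def using cardP by simp
  obtain m where m: "grp_index (G\<lparr>carrier := P\<rparr>) B = p ^ m"
    using dvd_prime_pow_eq[OF pp, of "grp_index (G\<lparr>carrier := P\<rparr>) B" e] eqB
    by (metis dvd_triv_left)
  have cB: "card B = p ^ vp (card B)"
    using dvd_prime_pow_eq[OF pp, of "card B" e] eqB unfolding vp_def by (metis dvd_triv_right)
  have "p ^ (m + vp (card B)) = p ^ e" using eqB m cB by (metis power_add)
  hence me: "m + vp (card B) = e" using p1 by (simp add: power_inject_exp)
  have vm: "vp (grp_index (G\<lparr>carrier := P\<rparr>) B) = m" unfolding m vp_def using pe by (simp add: multiplicity_prime_power)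
  have "grp_index G H * card H = order G" unfolding grp_index_def using lagrange[OF HG] .
  hence "vp (grp_index G H) + vp (card H) = e"
    unfolding vp_def e_def using posG pe
    by (metis mult_eq_0_iff not_gr0 prime_elem_multiplicity_mult_distrib)
  hence vB: "vp (card B) = vp (card K)" using me vm hyp cardK unfolding B_def K_def vp_def by simp

  have NK: "N <#> K = carrier G"
  proof
    show "N <#> K \<subseteq> carrier G" using setmult_subset_G[OF subgroup.subset[OF NsG] subgroup.subset[OF KG]] .
  next
    show "carrier G \<subseteq> N <#> K"
    proof
      fix x assume xG: "x \<in> carrier G"
      have "inv g \<otimes> x \<otimes> g \<in> N <#> H" using NH xG gG by simp
      then obtain n h where n: "n \<in> N" and h: "h \<in> H" and y: "inv g \<otimes> x \<otimes> g = n \<otimes> h"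
        unfolding set_mult_def by auto
      have nG: "n \<in> carrier G" using subgroup.mem_carrier[OF NsG n] .
      have hG: "h \<in> carrier G" using h HsubG by blast
      have canc: "inv g \<otimes> (g \<otimes> (h \<otimes> inv g)) = h \<otimes> inv g"
        using gG hG by (simp add: m_assoc[symmetric])
      have "x = g \<otimes> (inv g \<otimes> x \<otimes> g) \<otimes> inv g" using conjugation_is_surj[OF gG xG] by simp
      also have "\<dots> = (g \<otimes> n \<otimes> inv g) \<otimes> (g \<otimes> h \<otimes> inv g)"
        unfolding y using nG hG gG canc by (simp add: m_assoc)
      finally have xe: "x = (g \<otimes> n \<otimes> inv g) \<otimes> (g \<otimes> h \<otimes> inv g)" .
      have "g \<otimes> n \<otimes> inv g \<in> N" using normal.inv_op_closed2[OF NG gG n] .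
      moreover have "g \<otimes> h \<otimes> inv g \<in> K" unfolding Kimg using h by blast
      ultimately show "x \<in> N <#> K" unfolding xe set_mult_def by blast
    qed
  qed
  have eq4: "order G * card (N \<inter> K) = card N * card K"
    using card_set_mult[OF NsG KG finS[OF NsG] finS[OF KG]] NK cardG by simp
  have NKG: "subgroup (N \<inter> K) G" using subgroups_Inter_pair[OF NsG KG] .
  have s4: "e + vp (card (N \<inter> K)) = vp (card N) + vp (card K)"
  proof -
    have "vp (order G * card (N \<inter> K)) = vp (card N * card K)" using eq4 by simp
    thus ?thesis unfolding vp_def e_def using posG posS[OF NKG] posS[OF NsG] posS[OF KG] pe
      by (simp add: prime_elem_multiplicity_mult_distrib)
  qed


  have CG: "subgroup (A \<inter> B) G" using subgroups_Inter_pair[OF AG BG] .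
  have "card (A \<inter> B) dvd card (N \<inter> K)"
    using card_dvd_sub[OF CG NKG] unfolding A_def B_def by auto
  hence s5: "vp (card (A \<inter> B)) \<le> vp (card (N \<inter> K))"
    unfolding vp_def using posS[OF NKG] dvd_imp_multiplicity_le by auto

  have ABsub: "A <#> B \<subseteq> P"
  proof
    fix x assume "x \<in> A <#> B"
    then obtain a b where "a \<in> P" "b \<in> P" "x = a \<otimes> b" unfolding set_mult_def A_def B_def by auto
    thus "x \<in> P" using subgroup.m_closed[OF PG] by simp
  qed
  have eq3: "card (A <#> B) * card (A \<inter> B) = card A * card B"
    using card_set_mult[OF AG BG finS[OF AG] finS[OF BG]] .
  have posAB: "card (A <#> B) > 0"
  proof -
    have "card (A <#> B) * card (A \<inter> B) > 0" using eq3 posS[OF AG] posS[OF BG] by simp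
    thus ?thesis by simp
  qed
  have s3: "vp (card (A <#> B)) + vp (card (A \<inter> B)) = vp (card A) + vp (card B)"
  proof -
    have "vp (card (A <#> B) * card (A \<inter> B)) = vp (card A * card B)" using eq3 by simp
    thus ?thesis unfolding vp_def using posAB posS[OF CG] posS[OF AG] posS[OF BG] pe
      by (simp add: prime_elem_multiplicity_mult_distrib)
  qed
  have ge: "e \<le> vp (card (A <#> B))" using s1 s3 s4 s5 vB by linarith
  have "p ^ e dvd card (A <#> B)"
    using multiplicity_dvd[of p "card (A <#> B)"] ge unfolding vp_def
    by (meson dvd_trans le_imp_power_dvd)
  hence "p ^ e \<le> card (A <#> B)" using posAB by (simp add: dvd_imp_le)
  moreover have "card (A <#> B) \<le> card P" using ABsub finS[OF PG] card_mono by blast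
  ultimately have "card (A <#> B) = card P" using cardP by simp
  hence "A <#> B = P" using card_subset_eq[OF finS[OF PG] ABsub] by simp
  thus ?thesis unfolding A_def B_def K_def .
qed


theorem lemma5p2:
  fixes G :: "('a, 'b) monoid_scheme" and H N P :: "'a set" and p :: nat and g :: 'a
  assumes "group G" and "finite (carrier G)"
    and "subgroup H G" and "N \<lhd> G"
    and "N <#>\<^bsub>G\<^esub> H = carrier G"
    and "Factorial_Ring.prime p" and "p dvd grp_index G H" and "p dvd grp_index G N"
    and "is_sylow G p P"
    and "g \<in> carrier G"
    and "multiplicity p (grp_index (G\<lparr>carrier := P\<rparr>) (P \<inter> ((g <#\<^bsub>G\<^esub> H) #>\<^bsub>G\<^esub> inv\<^bsub>G\<^esub> g)))
         = multiplicity p (grp_index G H)"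
  shows "(P \<inter> N) <#>\<^bsub>G\<^esub> (P \<inter> ((g <#\<^bsub>G\<^esub> H) #>\<^bsub>G\<^esub> inv\<^bsub>G\<^esub> g)) = P"
  using group.main_lemma[OF assms(1) assms] .

end
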